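(* For $L_2>0$ define $\bar h:\mathbb{R}^{3\times3}\to\mathbb{R}$ by $\bar h(R)=g(\|R^TR-I\|_F)$ with $g(x)=L_2\sqrt{3L_2^2x^2+1}-L_2$. Then: (i) there is a polynomial $q$ such that for every $L_2>0$, $\bar h$ is $q(L_2)$-curvature bounded; (ii) $\bar h$ is twice differentiable; (iii) its second derivatives are locally Lipschitz; and (v) $g$ is monotone in $|x|$, $\min_x g(x)=0$, and $g(x)=L_2$ when $|x|=1/L_2$.
   Context: $\|\cdot\|_F$ is the Frobenius norm; $R$ is identified with a vector in $\mathbb{R}^9$. A function $\phi$ is $L$-curvature bounded if $\phi(x)+\frac L2\|x\|^2$ is convex and $\nabla\phi$ is $L$-Lipschitz. *)

theory Defs
  imports "HOL-Analysis.Analysis" "HOL-Computational_Algebra.Polynomial"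
begin

definition gfun :: "real \<Rightarrow> real \<Rightarrow> real" where
  "gfun L2 x = L2 * sqrt (3 * L2^2 * x^2 + 1) - L2"

text \<open>hbar(R) = g(||R^T R - I||_F). On real^3^3 the library norm is the Frobenius norm
  (R identified with a vector in R^9).\<close>
definition hbar :: "real \<Rightarrow> real^3^3 \<Rightarrow> real" where
  "hbar L2 R = gfun L2 (norm (transpose R ** R - mat 1))"

definition curvature_bounded :: "real \<Rightarrow> ('a::euclidean_space \<Rightarrow> real) \<Rightarrow> bool" where
  "curvature_bounded L phi \<longleftrightarrow>
     convex_on UNIV (\<lambda>x. phi x + L / 2 * norm x ^ 2) \<and>
     (\<exists>G. (\<forall>x. (phi has_derivative (\<lambda>v. G x \<bullet> v)) (at x)) \<and> L-lipschitz_on UNIV G)"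

end

theory Submission
  imports Defs
begin

lemma mat_inner: "(A::real^'n^'m) \<bullet> B = (\<Sum>i\<in>UNIV. \<Sum>j\<in>UNIV. A$i$j * B$i$j)"
  by (simp add: inner_vec_def)

lemma mat_norm_sq: "norm (A::real^'n^'m) ^ 2 = (\<Sum>i\<in>UNIV. \<Sum>j\<in>UNIV. (A$i$j)^2)"
  unfolding power2_norm_eq_inner mat_inner by (simp add: power2_eq_square)

lemma mat_norm_sq_rows: "norm (A::real^'n^'m) ^ 2 = (\<Sum>i\<in>UNIV. norm (A$i) ^2)"
  by (simp add: power2_norm_eq_inner inner_vec_def)

lemma transpose_norm: "norm (transpose (A::real^'n^'m)) = norm A"
proof -
  have "norm (transpose A)^2 = norm A ^2"
    unfolding mat_norm_sq transpose_def apply simp by (rule sum.swap)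
  then show ?thesis by (simp add: power2_eq_iff_nonneg)
qed

lemma transpose_inner: "transpose (A::real^'n^'m) \<bullet> transpose B = A \<bullet> B"
  unfolding mat_inner transpose_def apply simp by (rule sum.swap)

lemma sum3_swap: "(\<Sum>i\<in>A. \<Sum>j\<in>B. \<Sum>k\<in>C. f i j k) = (\<Sum>k\<in>C. \<Sum>j\<in>B. \<Sum>i\<in>A. f i j k)"
proof -
  have "(\<Sum>i\<in>A. \<Sum>j\<in>B. \<Sum>k\<in>C. f i j k) = (\<Sum>i\<in>A. \<Sum>k\<in>C. \<Sum>j\<in>B. f i j k)"
    by (rule sum.cong[OF refl], rule sum.swap)
  also have "\<dots> = (\<Sum>k\<in>C. \<Sum>i\<in>A. \<Sum>j\<in>B. f i j k)" by (rule sum.swap)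
  also have "\<dots> = (\<Sum>k\<in>C. \<Sum>j\<in>B. \<Sum>i\<in>A. f i j k)"
    by (rule sum.cong[OF refl], rule sum.swap)
  finally show ?thesis .
qed

lemma mul_inner1: "((A::real^'n^'m) ** (B::real^'p^'n)) \<bullet> C = B \<bullet> (transpose A ** C)"
  unfolding mat_inner transpose_def matrix_matrix_mult_def
  apply (simp add: sum_distrib_left sum_distrib_right mult_ac)
  by (rule sum3_swap)

lemma mul_inner2: "((A::real^'n^'m) ** (B::real^'p^'n)) \<bullet> C = A \<bullet> (C ** transpose B)"
  unfolding mat_inner transpose_def matrix_matrix_mult_def
  apply (simp add: sum_distrib_left sum_distrib_right mult_ac)
  by (rule sum.cong[OF refl], rule sum.swap)

lemma frob_mul: "norm ((A::real^'n^'m) ** (B::real^'p^'n)) \<le> norm A * norm B"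
proof -
  define col where "col j = (\<chi> k. B$k$j)" for j
  have e: "(A ** B)$i$j = A$i \<bullet> col j" for i j
    by (simp add: matrix_matrix_mult_def col_def inner_vec_def)
  have cB: "(\<Sum>j\<in>UNIV. norm (col j)^2) = norm B ^ 2"
    unfolding mat_norm_sq power2_norm_eq_inner col_def inner_vec_def
    apply (simp add: power2_eq_square) by (rule sum.swap)
  have "norm (A ** B)^2 = (\<Sum>i\<in>UNIV. \<Sum>j\<in>UNIV. (A$i \<bullet> col j)^2)"
    by (simp add: mat_norm_sq e)
  also have "\<dots> \<le> (\<Sum>i\<in>UNIV. \<Sum>j\<in>UNIV. norm (A$i)^2 * norm (col j)^2)"
  proof (intro sum_mono)
    fix i j
    have "\<bar>A$i \<bullet> col j\<bar> \<le> norm (A$i) * norm (col j)" by (rule Cauchy_Schwarz_ineq2)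
    then have "\<bar>A$i \<bullet> col j\<bar>^2 \<le> (norm (A$i) * norm (col j))^2"
      by (intro power_mono) auto
    then show "(A$i \<bullet> col j)^2 \<le> norm (A$i)^2 * norm (col j)^2"
      by (simp add: power_mult_distrib)
  qed
  also have "\<dots> = (norm A * norm B)^2"
    by (simp add: sum_distrib_left[symmetric] sum_distrib_right[symmetric] cB mat_norm_sq_rows power_mult_distrib)
  finally show ?thesis by (rule power2_le_imp_le) simp
qed

lemma bb_mul: "bounded_bilinear (\<lambda>(A::real^'n^'m) (B::real^'p^'n). A ** B)"
proof
  show "(a + a') ** b = a ** b + a' ** b" for a a' :: "real^'n^'m" and b :: "real^'p^'n"
    by (simp add: vec_eq_iff matrix_matrix_mult_def sum.distrib distrib_right)
  show "a ** (b + b') = a ** b + a ** b'" for a :: "real^'n^'m" and b b' :: "real^'p^'n"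
    by (simp add: matrix_add_ldistrib)
  show "(r *\<^sub>R a) ** b = r *\<^sub>R (a ** b)" for r and a :: "real^'n^'m" and b :: "real^'p^'n"
    by (simp add: vec_eq_iff matrix_matrix_mult_def sum_distrib_left mult_ac)
  show "a ** (r *\<^sub>R b) = r *\<^sub>R (a ** b)" for r and a :: "real^'n^'m" and b :: "real^'p^'n"
    by (simp add: vec_eq_iff matrix_matrix_mult_def sum_distrib_left mult_ac)
  show "\<exists>K. \<forall>a b. norm (a ** b) \<le> norm (a::real^'n^'m) * norm (b::real^'p^'n) * K"
    by (rule exI[of _ 1]) (simp add: frob_mul)
qed

lemma bl_transpose: "bounded_linear (transpose :: real^'n^'m \<Rightarrow> real^'m^'n)"
proof
  show "transpose (a + b) = transpose a + transpose b" for a b :: "real^'n^'m"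
    by (simp add: vec_eq_iff transpose_def)
  show "transpose (r *\<^sub>R a) = r *\<^sub>R transpose a" for r and a :: "real^'n^'m"
    by (simp add: transpose_scalar)
  show "\<exists>K. \<forall>a. norm (transpose (a::real^'n^'m)) \<le> norm a * K"
    by (rule exI[of _ 1]) (simp add: transpose_norm)
qed

definition Mf :: "real^3^3 \<Rightarrow> real^3^3" where "Mf R = transpose R ** R - mat 1"
definition Nf :: "real^3^3 \<Rightarrow> real^3^3" where "Nf R = R ** Mf R"
definition sf :: "real \<Rightarrow> real^3^3 \<Rightarrow> real" where "sf a R = sqrt (a * (Mf R \<bullet> Mf R) + 1)"
definition Gf :: "real \<Rightarrow> real \<Rightarrow> real^3^3 \<Rightarrow> real^3^3" where
  "Gf a c R = (c / sf a R) *\<^sub>R Nf R"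
definition Hap :: "real \<Rightarrow> real \<Rightarrow> real^3^3 \<Rightarrow> real^3^3 \<Rightarrow> real^3^3" where
  "Hap a c R V = (c / sf a R) *\<^sub>R (V ** Mf R + R ** (transpose V ** R + transpose R ** V))
     - (2*a*c / sf a R ^ 3 * (Nf R \<bullet> V)) *\<^sub>R Nf R"

lemma transpose_diff: "transpose (A - B) = transpose A - transpose (B::real^'n^'m)"
  by (simp add: vec_eq_iff transpose_def)

lemma Msym: "transpose (Mf R) = Mf R"
  by (simp add: Mf_def transpose_diff matrix_transpose_mul)

lemma dM: "(Mf has_derivative (\<lambda>V. transpose V ** R + transpose R ** V)) (at R)"
proof -
  have t: "((\<lambda>x. transpose x) has_derivative (\<lambda>x. transpose x)) (at R)"
    by (rule bounded_linear.has_derivative[OF bl_transpose has_derivative_ident])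
  have "((\<lambda>R. transpose R ** R) has_derivative (\<lambda>V. transpose R ** V + transpose V ** R)) (at R)"
    using bounded_bilinear.FDERIV[OF bb_mul t has_derivative_ident] by simp
  then have "((\<lambda>R. transpose R ** R - mat 1) has_derivative (\<lambda>V. transpose R ** V + transpose V ** R)) (at R)"
    by (auto intro!: derivative_eq_intros)
  then show ?thesis unfolding Mf_def by (rule has_derivative_eq_rhs) (auto simp: add.commute)
qed

lemma dN: "(Nf has_derivative (\<lambda>V. V ** Mf R + R ** (transpose V ** R + transpose R ** V))) (at R)"
  unfolding Nf_def
  using bounded_bilinear.FDERIV[OF bb_mul has_derivative_ident dM, of R]
  by (simp add: add.commute)

lemma Minner: "Mf R \<bullet> (transpose V ** R + transpose R ** V) = 2 * (Nf R \<bullet> V)"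
proof -
  have 1: "Mf R \<bullet> (transpose V ** R) = V \<bullet> Nf R"
  proof -
    have "Mf R \<bullet> (transpose V ** R) = (transpose V ** R) \<bullet> Mf R" by (simp add: inner_commute)
    also have "\<dots> = transpose V \<bullet> (Mf R ** transpose R)" by (rule mul_inner2)
    also have "\<dots> = V \<bullet> transpose (Mf R ** transpose R)"
      by (metis transpose_inner transpose_transpose)
    also have "\<dots> = V \<bullet> Nf R" by (simp add: matrix_transpose_mul Msym Nf_def)
    finally show ?thesis .
  qed
  have 2: "Mf R \<bullet> (transpose R ** V) = V \<bullet> Nf R"
  proof -
    have "Mf R \<bullet> (transpose R ** V) = (transpose R ** V) \<bullet> Mf R" by (simp add: inner_commute)
    also have "\<dots> = V \<bullet> (transpose (transpose R) ** Mf R)" by (rule mul_inner1)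
    finally show ?thesis by (simp add: Nf_def)
  qed
  show ?thesis by (simp add: inner_add_right 1 2 inner_commute)
qed

lemma dF: "((\<lambda>R. Mf R \<bullet> Mf R) has_derivative (\<lambda>V. 4 * (Nf R \<bullet> V))) (at R)"
  using has_derivative_inner[OF dM dM, of R]
  by (rule has_derivative_eq_rhs) (auto simp: Minner inner_commute[of "transpose _ ** R + _" "Mf R"])

lemma F_nonneg: "0 \<le> Mf R \<bullet> Mf R" by simp

lemma s_ge1: "0 \<le> a \<Longrightarrow> 1 \<le> sf a R"
  unfolding sf_def by simp

lemma ds: assumes "0 \<le> a" shows "(sf a has_derivative (\<lambda>V. 2*a*(Nf R \<bullet> V) / sf a R)) (at R)"
proof -
  have "0 \<le> a * (Mf R \<bullet> Mf R)" using assms by simp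
  then have p: "0 < a * (Mf R \<bullet> Mf R) + 1" by linarith
  have "((\<lambda>R. a * (Mf R \<bullet> Mf R) + 1) has_derivative (\<lambda>V. a * (4 * (Nf R \<bullet> V)))) (at R)"
    by (rule has_derivative_eq_rhs[OF has_derivative_add[OF has_derivative_mult_right[OF dF] has_derivative_const]]) simp
  from DERIV_compose_FDERIV[OF DERIV_real_sqrt[OF p] this]
  show ?thesis unfolding sf_def
    by (rule has_derivative_eq_rhs) (auto simp: field_simps)
qed

lemma dG: assumes "0 \<le> a" shows "(Gf a c has_derivative Hap a c R) (at R)"
proof -
  have s0: "sf a R \<noteq> 0" using s_ge1[OF assms, of R] by auto
  have "((\<lambda>R. c / sf a R) has_derivative (\<lambda>V. - c * (inverse (sf a R) * (2*a*(Nf R \<bullet> V) / sf a R) * inverse (sf a R)))) (at R)"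
    using has_derivative_divide[OF has_derivative_const ds[OF assms] s0] by simp
  from has_derivative_scaleR[OF this dN]
  show ?thesis unfolding Gf_def Hap_def
    by (rule has_derivative_eq_rhs) (auto simp: fun_eq_iff field_simps power3_eq_cube)
qed

lemma hbar_eq: "hbar L2 R = L2 * sf (3*L2^2) R - L2"
  by (simp add: hbar_def gfun_def sf_def Mf_def power2_norm_eq_inner)

lemma dh: "0 < L2 \<Longrightarrow> (hbar L2 has_derivative (\<lambda>V. Gf (3*L2^2) (2*(3*L2^2)*L2) R \<bullet> V)) (at R)"
  unfolding hbar_eq[abs_def]
  apply (rule has_derivative_eq_rhs)
   apply (rule derivative_eq_intros ds | simp)+
  apply (auto simp: fun_eq_iff Gf_def field_simps)
  done

lemma norm_mat1_sq: "mat 1 \<bullet> (mat 1 :: real^3^3) = 3"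
  by (simp add: mat_inner mat_def if_distrib if_distribR cong: if_cong)

lemma r2_bound: "norm R ^ 2 \<le> 2 * norm (Mf R) + 3"
proof -
  have e1: "norm R ^ 2 = (transpose R ** R) \<bullet> mat 1"
    by (simp add: mul_inner1 power2_norm_eq_inner)
  have e2: "transpose R ** R = Mf R + mat 1" by (simp add: Mf_def)
  have e3: "(Mf R + mat 1) \<bullet> mat 1 = Mf R \<bullet> mat 1 + 3"
    by (simp add: inner_add_left norm_mat1_sq)
  have cs: "Mf R \<bullet> mat 1 \<le> norm (Mf R) * norm (mat 1 :: real^3^3)"
    by (rule norm_cauchy_schwarz)
  have n2: "norm (mat 1 :: real^3^3) \<le> 2"
  proof -
    have "norm (mat 1 :: real^3^3) ^ 2 = 3" by (simp add: power2_norm_eq_inner norm_mat1_sq)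
    then have "norm (mat 1 :: real^3^3) ^ 2 \<le> 2^2" by simp
    then show ?thesis by (rule power2_le_imp_le) simp
  qed
  have "norm (Mf R) * norm (mat 1 :: real^3^3) \<le> norm (Mf R) * 2"
    using n2 by (intro mult_left_mono) auto
  moreover have "norm R ^ 2 = Mf R \<bullet> mat 1 + 3" using e1 e2 e3 by simp
  ultimately show ?thesis using cs by linarith
qed

lemma s_sq: "0 \<le> a \<Longrightarrow> sf a R ^ 2 = a * norm (Mf R)^2 + 1"
  unfolding sf_def power2_norm_eq_inner by (simp add: add_nonneg_nonneg)

lemma Hbound:
  assumes L: "0 < L2" and a: "a = 3*L2^2" and c: "c = 2*a*L2"
  shows "norm (Hap a c R V) \<le> (100*L2^2 + 100*L2^3) * norm V"
proof -
  define m where "m = norm (Mf R)"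
  define s where "s = sf a R"
  define r2 where "r2 = norm R ^ 2"
  have a0: "0 \<le> a" using a by simp
  have c0: "0 \<le> c" using c a L by simp
  have s1: "1 \<le> s" using s_ge1[OF a0] s_def by simp
  have ss: "s^2 = a*m^2 + 1" using s_sq[OF a0] s_def m_def by simp
  have m0: "0 \<le> m" by (simp add: m_def)
  have ms: "L2*m \<le> s"
  proof (rule power2_le_imp_le)
    show "(L2*m)^2 \<le> s^2" using ss a by (simp add: power_mult_distrib)
  qed (use s1 in simp)
  have am: "a*m^2 \<le> s^2" using ss by simp
  have r2b: "r2 \<le> 2*m + 3" using r2_bound r2_def m_def by simp
  have r20: "0 \<le> r2" by (simp add: r2_def)
  have t1: "norm (V ** Mf R + R ** (transpose V ** R + transpose R ** V)) \<le> (m + 2*r2) * norm V"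
  proof -
    have "norm (V ** Mf R) \<le> norm V * m" using frob_mul m_def by metis
    moreover have "norm (R ** (transpose V ** R)) \<le> r2 * norm V"
    proof -
      have "norm (R ** (transpose V ** R)) \<le> norm R * (norm (transpose V) * norm R)"
        by (meson frob_mul mult_left_mono norm_ge_zero order_trans)
      then show ?thesis by (simp add: transpose_norm r2_def power2_eq_square mult_ac)
    qed
    moreover have "norm (R ** (transpose R ** V)) \<le> r2 * norm V"
    proof -
      have "norm (R ** (transpose R ** V)) \<le> norm R * (norm (transpose R) * norm V)"
        by (meson frob_mul mult_left_mono norm_ge_zero order_trans)
      then show ?thesis by (simp add: transpose_norm r2_def power2_eq_square mult_ac)
    qed
    moreover have "norm (V ** Mf R + (R ** (transpose V ** R) + R ** (transpose R ** V)))
       \<le> norm (V ** Mf R) + norm (R ** (transpose V ** R) + R ** (transpose R ** V))"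
      by (rule norm_triangle_ineq)
    moreover have "norm (R ** (transpose V ** R) + R ** (transpose R ** V))
       \<le> norm (R ** (transpose V ** R)) + norm (R ** (transpose R ** V))"
      by (rule norm_triangle_ineq)
    moreover have "(m + 2*r2) * norm V = norm V * m + r2*norm V + r2 * norm V" by (simp add: algebra_simps)
    ultimately show ?thesis by (simp add: matrix_add_ldistrib)
  qed
  have t2: "norm ((Nf R \<bullet> V) *\<^sub>R Nf R) \<le> r2 * m^2 * norm V"
  proof -
    have nN: "norm (Nf R) \<le> norm R * m" unfolding Nf_def m_def by (rule frob_mul)
    have "norm ((Nf R \<bullet> V) *\<^sub>R Nf R) = \<bar>Nf R \<bullet> V\<bar> * norm (Nf R)" by simp
    also have "\<dots> \<le> (norm (Nf R) * norm V) * norm (Nf R)"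
      by (intro mult_right_mono Cauchy_Schwarz_ineq2) simp
    also have "\<dots> = norm (Nf R)^2 * norm V" by (simp add: power2_eq_square)
    also have "\<dots> \<le> (norm R * m)^2 * norm V"
      by (intro mult_right_mono power_mono nN) simp_all
    finally show ?thesis by (simp add: r2_def power_mult_distrib)
  qed
  have "norm (Hap a c R V) \<le> (c/s) * ((m + 2*r2) * norm V) + (2*a*c/s^3) * (r2 * m^2 * norm V)"
  proof -
    have k1: "0 \<le> c / s" using c0 s1 by simp
    have k2: "0 \<le> 2*a*c / s^3" using c0 s1 a0 by simp
    have "Hap a c R V = (c / s) *\<^sub>R (V ** Mf R + R ** (transpose V ** R + transpose R ** V))
       - (2*a*c / s ^ 3) *\<^sub>R ((Nf R \<bullet> V) *\<^sub>R Nf R)"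
      unfolding Hap_def s_def by simp
    then have "norm (Hap a c R V) \<le> norm ((c / s) *\<^sub>R (V ** Mf R + R ** (transpose V ** R + transpose R ** V)))
       + norm ((2*a*c / s ^ 3) *\<^sub>R ((Nf R \<bullet> V) *\<^sub>R Nf R))"
      using norm_triangle_ineq4 by metis
    also have "\<dots> = (c / s) * norm (V ** Mf R + R ** (transpose V ** R + transpose R ** V))
       + (2*a*c / s ^ 3) * norm ((Nf R \<bullet> V) *\<^sub>R Nf R)"
      using k1 k2 by (simp only: norm_scaleR abs_of_nonneg)
    also have "\<dots> \<le> (c/s) * ((m + 2*r2) * norm V) + (2*a*c/s^3) * (r2 * m^2 * norm V)"
      using t1 t2 k1 k2 by (intro add_mono mult_left_mono)
    finally show ?thesis .
  qed
  also have "\<dots> = ((c/s) * (m + 2*r2) + (2*a*c/s^3) * (r2 * m^2)) * norm V"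
    by (simp add: algebra_simps)
  also have "\<dots> \<le> (100*L2^2 + 100*L2^3) * norm V"
  proof (rule mult_right_mono)
    have cm: "c * m / s \<le> 6 * L2^2"
    proof -
      have "c * m = 6 * L2^2 * (L2 * m)" using a c by (simp add: power2_eq_square)
      also have "\<dots> \<le> 6 * L2^2 * s" using ms by (intro mult_left_mono) auto
      finally show ?thesis using s1 by (simp add: divide_le_eq)
    qed
    have cs: "c / s \<le> 6 * L2^3"
    proof -
      have "c * 1 \<le> c * s" using s1 c0 by (intro mult_left_mono) auto
      then have "c / s \<le> c" using s1 by (simp add: divide_le_eq)
      then show ?thesis using a c by (simp add: power2_eq_square power3_eq_cube)
    qed
    have q: "a*m^2/s^2 \<le> 1" using am s1 by (simp add: divide_le_eq)
    have "(c/s) * (m + 2*r2) \<le> (c/s) * (5*m + 6)"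
      using r2b s1 c0 by (intro mult_left_mono) auto
    also have "\<dots> = 5 * (c*m/s) + 6 * (c/s)" by (simp add: algebra_simps)
    finally have A1: "(c/s) * (m + 2*r2) \<le> 30 * L2^2 + 36 * L2^3" using cm cs by linarith
    have "(2*a*c/s^3) * (r2 * m^2) \<le> (2*a*c/s^3) * ((2*m+3) * m^2)"
      using r2b s1 c0 a0 by (intro mult_left_mono mult_right_mono) auto
    also have "\<dots> = 2 * ((a*m^2/s^2) * (2*(c*m/s) + 3 * (c/s)))"
      using s1 by (simp add: divide_simps) algebra
    also have "\<dots> \<le> 2 * (1 * (2*(6*L2^2) + 3*(6*L2^3)))"
    proof -
      have "0 \<le> a*m^2/s^2" using a0 by simp
      moreover have "0 \<le> 2 * (c * m / s) + 3 * (c / s)" using c0 m0 s1 by simp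
      moreover have "2 * (c * m / s) + 3 * (c / s) \<le> 2*(6*L2^2) + 3*(6*L2^3)" using cm cs by linarith
      ultimately have "(a*m^2/s^2) * (2*(c*m/s) + 3 * (c/s)) \<le> 1 * (2*(6*L2^2) + 3*(6*L2^3))"
        using q by (intro mult_mono) auto
      then show ?thesis by linarith
    qed
    finally have A2: "(2*a*c/s^3) * (r2 * m^2) \<le> 24 * L2^2 + 36 * L2^3" by simp
    have "0 \<le> L2^2" "0 \<le> L2^3" using L by auto
    then show "(c/s) * (m + 2*r2) + (2*a*c/s^3) * (r2 * m^2) \<le> 100*L2^2 + 100*L2^3"
      using A1 A2 by linarith
  qed simp
  finally show ?thesis .
qed

definition LL :: "(real^3^3 \<Rightarrow> 'b::real_normed_vector) \<Rightarrow> bool" where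
  "LL f \<longleftrightarrow> (\<forall>R. \<exists>e>0. \<exists>C. C-lipschitz_on (ball R e) f)"

lemma lip_bounded:
  assumes "C-lipschitz_on (ball R e) f" "x \<in> ball R e"
  shows "norm (f x) \<le> norm (f R) + C * e"
proof -
  have C0: "0 \<le> C" using assms(1) lipschitz_on_nonneg by blast
  have "dist R x < e" using assms(2) by simp
  then have "0 < e" by (metis zero_le_dist le_less_trans)
  then have R: "R \<in> ball R e" by simp
  have "dist (f x) (f R) \<le> C * dist x R" using lipschitz_onD[OF assms(1) assms(2) R] .
  also have "\<dots> \<le> C * e" using assms(2) C0 by (intro mult_left_mono) (auto simp: dist_commute)
  finally have "dist (f x) (f R) \<le> C * e" .
  then show ?thesis by (metis dist_norm norm_triangle_sub order_trans add_le_cancel_left add.commute)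
qed

lemma LL_bilin:
  assumes b: "bounded_bilinear b" and f: "LL f" and g: "LL g"
  shows "LL (\<lambda>x. b (f x) (g x))"
  unfolding LL_def
proof
  fix R
  from f obtain e1 C1 where e1: "e1 > 0" and l1: "C1-lipschitz_on (ball R e1) f" unfolding LL_def by blast
  from g obtain e2 C2 where e2: "e2 > 0" and l2: "C2-lipschitz_on (ball R e2) g" unfolding LL_def by blast
  obtain K where K: "K > 0" "\<And>a c. norm (b a c) \<le> norm a * norm c * K"
    using bounded_bilinear.pos_bounded[OF b] by blast
  define e where "e = min e1 e2"
  define Bf where "Bf = norm (f R) + C1 * e1"
  define Bg where "Bg = norm (g R) + C2 * e2"
  have C1: "0 \<le> C1" using l1 lipschitz_on_nonneg by blast
  have C2: "0 \<le> C2" using l2 lipschitz_on_nonneg by blast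
  have sub1: "ball R e \<subseteq> ball R e1" and sub2: "ball R e \<subseteq> ball R e2" by (auto simp: e_def)
  have bf: "norm (f x) \<le> Bf" if "x \<in> ball R e" for x
    using lip_bounded[OF l1] that sub1 Bf_def by blast
  have bg: "norm (g x) \<le> Bg" if "x \<in> ball R e" for x
    using lip_bounded[OF l2] that sub2 Bg_def by blast
  have "(K * (C1 * Bg + Bf * C2))-lipschitz_on (ball R e) (\<lambda>x. b (f x) (g x))"
  proof (rule lipschitz_onI)
    fix x y assume x: "x \<in> ball R e" and y: "y \<in> ball R e"
    have x1: "x \<in> ball R e1" "y \<in> ball R e1" using x y sub1 by auto
    have x2: "x \<in> ball R e2" "y \<in> ball R e2" using x y sub2 by auto
    have df: "norm (f x - f y) \<le> C1 * dist x y"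
      using lipschitz_onD[OF l1 x1] by (simp add: dist_norm)
    have dg: "norm (g x - g y) \<le> C2 * dist x y"
      using lipschitz_onD[OF l2 x2] by (simp add: dist_norm)
    have eq: "b (f x) (g x) - b (f y) (g y) = b (f x - f y) (g x) + b (f y) (g x - g y)"
      by (simp add: bounded_bilinear.diff_left[OF b] bounded_bilinear.diff_right[OF b])
    have "norm (b (f x - f y) (g x)) \<le> norm (f x - f y) * norm (g x) * K" by (rule K(2))
    also have "\<dots> \<le> (C1 * dist x y) * Bg * K"
      using df bg[OF x] K(1) C1 by (intro mult_right_mono mult_mono) auto
    finally have n1: "norm (b (f x - f y) (g x)) \<le> (C1 * dist x y) * Bg * K" .
    have "norm (b (f y) (g x - g y)) \<le> norm (f y) * norm (g x - g y) * K" by (rule K(2))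
    also have "\<dots> \<le> Bf * (C2 * dist x y) * K"
      using dg bf[OF y] K(1) C2 order_trans[OF norm_ge_zero bf[OF y]] by (intro mult_right_mono mult_mono) auto
    finally have n2: "norm (b (f y) (g x - g y)) \<le> Bf * (C2 * dist x y) * K" .
    have "dist (b (f x) (g x)) (b (f y) (g y)) \<le> norm (b (f x - f y) (g x)) + norm (b (f y) (g x - g y))"
      unfolding dist_norm eq by (rule norm_triangle_ineq)
    also have "\<dots> \<le> (C1 * dist x y) * Bg * K + Bf * (C2 * dist x y) * K" using n1 n2 by simp
    also have "\<dots> = K * (C1 * Bg + Bf * C2) * dist x y" by (simp add: algebra_simps)
    finally show "dist (b (f x) (g x)) (b (f y) (g y)) \<le> K * (C1 * Bg + Bf * C2) * dist x y" .
  next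
    have "R \<in> ball R e" using e1 e2 by (simp add: e_def)
    then have "0 \<le> Bf" "0 \<le> Bg" using bf bg norm_ge_zero order_trans by blast+
    then show "0 \<le> K * (C1 * Bg + Bf * C2)" using K C1 C2 by simp
  qed
  moreover have "e > 0" using e1 e2 by (simp add: e_def)
  ultimately show "\<exists>e>0. \<exists>C. C-lipschitz_on (ball R e) (\<lambda>x. b (f x) (g x))" by blast
qed

lemma LL_const: "LL (\<lambda>x. c)"
  unfolding LL_def using lipschitz_on_constant zero_less_one by blast

lemma LL_id: "LL (\<lambda>x. x)"
  unfolding LL_def using lipschitz_on_id zero_less_one by blast

lemma LL_lin: assumes "bounded_linear l" "LL f" shows "LL (\<lambda>x. l (f x))"
proof -
  have "bounded_bilinear (\<lambda>(u::real) v. u *\<^sub>R l v)"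
    by (rule bounded_bilinear.comp[OF bounded_bilinear_scaleR bounded_linear_ident assms(1)])
  from LL_bilin[OF this LL_const assms(2), of 1] show ?thesis by simp
qed

lemma LL_add: assumes "LL f" "LL g" shows "LL (\<lambda>x. f x + g x)"
  unfolding LL_def
proof
  fix R
  from assms(1) obtain e1 C1 where e1: "e1 > 0" and l1: "C1-lipschitz_on (ball R e1) f" unfolding LL_def by blast
  from assms(2) obtain e2 C2 where e2: "e2 > 0" and l2: "C2-lipschitz_on (ball R e2) g" unfolding LL_def by blast
  have "(C1 + C2)-lipschitz_on (ball R (min e1 e2)) (\<lambda>x. f x + g x)"
    by (intro lipschitz_on_add lipschitz_on_subset[OF l1] lipschitz_on_subset[OF l2]) auto
  then show "\<exists>e>0. \<exists>C. C-lipschitz_on (ball R e) (\<lambda>x. f x + g x)" using e1 e2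
    by (intro exI[of _ "min e1 e2"]) auto
qed

lemma LL_minus: assumes "LL f" shows "LL (\<lambda>x. - f x)"
  using LL_lin[OF bounded_linear_minus[OF bounded_linear_ident] assms] by simp

lemma LL_diff: assumes "LL f" "LL g" shows "LL (\<lambda>x. f x - g x)"
  using LL_add[OF assms(1) LL_minus[OF assms(2)]] by simp

lemma LL_compose_real:
  assumes f: "LL (f :: real^3^3 \<Rightarrow> real)" and S: "\<And>x. f x \<in> S"
    and h: "\<And>u v. u \<in> S \<Longrightarrow> v \<in> S \<Longrightarrow> \<bar>h u - h v\<bar> \<le> \<bar>u - v\<bar>"
  shows "LL (\<lambda>x. h (f x))"
  unfolding LL_def
proof
  fix R
  from f obtain e C where e: "e > 0" and l: "C-lipschitz_on (ball R e) f" unfolding LL_def by blast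
  have "C-lipschitz_on (ball R e) (\<lambda>x. h (f x))"
  proof (rule lipschitz_onI)
    fix x y assume "x \<in> ball R e" "y \<in> ball R e"
    then have "dist (f x) (f y) \<le> C * dist x y" using lipschitz_onD[OF l] by blast
    then show "dist (h (f x)) (h (f y)) \<le> C * dist x y" using h[OF S S, of x y]
      by (simp add: dist_real_def)
  qed (use l lipschitz_on_nonneg in blast)
  then show "\<exists>e>0. \<exists>C. C-lipschitz_on (ball R e) (\<lambda>x. h (f x))" using e by blast
qed

lemma sqrt_lip1: "1 \<le> u \<Longrightarrow> 1 \<le> v \<Longrightarrow> \<bar>sqrt u - sqrt v\<bar> \<le> \<bar>u - v\<bar>"
proof -
  assume u: "1 \<le> u" and v: "1 \<le> v"
  have su: "1 \<le> sqrt u" "1 \<le> sqrt v" using u v by auto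
  have "u - v = (sqrt u - sqrt v) * (sqrt u + sqrt v)"
    using u v by (simp add: algebra_simps)
  then have "\<bar>u - v\<bar> = \<bar>sqrt u - sqrt v\<bar> * (sqrt u + sqrt v)" using su by (simp add: abs_mult)
  moreover have "\<bar>sqrt u - sqrt v\<bar> * 1 \<le> \<bar>sqrt u - sqrt v\<bar> * (sqrt u + sqrt v)"
  proof (intro mult_left_mono)
    show "1 \<le> sqrt u + sqrt v" using su by linarith
  qed simp
  ultimately show ?thesis by simp
qed

lemma inv_lip1: "1 \<le> u \<Longrightarrow> 1 \<le> v \<Longrightarrow> \<bar>1 / u - 1 / (v::real)\<bar> \<le> \<bar>u - v\<bar>"
proof -
  assume u: "1 \<le> u" and v: "1 \<le> v"
  have "1 / u - 1 / v = (v - u) / (u * v)" using u v by (simp add: field_simps)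
  then have "\<bar>1 / u - 1 / v\<bar> = \<bar>u - v\<bar> / (u * v)" using u v by (simp add: abs_minus_commute)
  also have "\<dots> \<le> \<bar>u - v\<bar>"
  proof -
    have "1 \<le> u * v" using u v by (metis mult_mono' mult_1 zero_le_one order_trans)
    then show ?thesis by (simp add: divide_le_eq) (metis abs_ge_zero mult_left_mono mult.right_neutral)
  qed
  finally show ?thesis .
qed

definition Hb :: "real \<Rightarrow> real \<Rightarrow> real^3^3 \<Rightarrow> ((real^3^3) \<Rightarrow>\<^sub>L (real^3^3))" where
  "Hb a c R = Blinfun (Hap a c R)"

abbreviation "PLm \<equiv> bounded_bilinear.prod_left (\<lambda>(A::real^3^3) (B::real^3^3). A ** B)"
abbreviation "PRm \<equiv> bounded_bilinear.prod_right (\<lambda>(A::real^3^3) (B::real^3^3). A ** B)"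
abbreviation "SLm \<equiv> bounded_bilinear.prod_left (scaleR :: real \<Rightarrow> real^3^3 \<Rightarrow> real^3^3)"
abbreviation "IRm \<equiv> bounded_bilinear.prod_right (inner :: real^3^3 \<Rightarrow> real^3^3 \<Rightarrow> real)"
definition TT :: "(real^3^3) \<Rightarrow>\<^sub>L (real^3^3)" where "TT = Blinfun transpose"

lemma TT_apply: "blinfun_apply TT V = transpose V"
  unfolding TT_def by (simp add: bounded_linear_Blinfun_apply[OF bl_transpose])

lemma PLm_apply: "blinfun_apply (PLm X) V = V ** X"
  by (simp add: bounded_bilinear.prod_left.rep_eq[OF bb_mul])
lemma PRm_apply: "blinfun_apply (PRm X) V = X ** V"
  by (simp add: bounded_bilinear.prod_right.rep_eq[OF bb_mul])
lemma SLm_apply: "blinfun_apply (SLm X) u = u *\<^sub>R X"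
  by (simp add: bounded_bilinear.prod_left.rep_eq[OF bounded_bilinear_scaleR])
lemma IRm_apply: "blinfun_apply (IRm X) V = X \<bullet> V"
  by (simp add: bounded_bilinear.prod_right.rep_eq[OF bounded_bilinear_inner])

definition wfun :: "real \<Rightarrow> real^3^3 \<Rightarrow> real" where "wfun a R = 1 / sf a R"

lemma Hb_eq: assumes "0 \<le> a"
  shows "Hb a c R = (c * wfun a R) *\<^sub>R (PLm (Mf R) + (PRm R o\<^sub>L PLm R o\<^sub>L TT) + (PRm R o\<^sub>L PRm (transpose R)))
     - (2*a*c * (wfun a R * wfun a R * wfun a R)) *\<^sub>R (SLm (Nf R) o\<^sub>L IRm (Nf R))"
proof (rule blinfun_eqI)
  fix V
  have bl: "bounded_linear (Hap a c R)" using has_derivative_bounded_linear[OF dG[OF assms]] .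
  show "blinfun_apply (Hb a c R) V = blinfun_apply ((c * wfun a R) *\<^sub>R (PLm (Mf R) + (PRm R o\<^sub>L PLm R o\<^sub>L TT) + (PRm R o\<^sub>L PRm (transpose R)))
     - (2*a*c * (wfun a R * wfun a R * wfun a R)) *\<^sub>R (SLm (Nf R) o\<^sub>L IRm (Nf R))) V"
    unfolding Hb_def bounded_linear_Blinfun_apply[OF bl]
    by (simp add: Hap_def blinfun.bilinear_simps TT_apply PLm_apply PRm_apply SLm_apply IRm_apply
        wfun_def matrix_add_ldistrib power3_eq_cube)
qed

lemma LL_M: "LL Mf"
proof -
  have "LL (\<lambda>R. transpose R ** R - mat 1)"
    by (intro LL_diff LL_const LL_bilin[OF bb_mul] LL_lin[OF bl_transpose] LL_id)
  then show ?thesis unfolding Mf_def[abs_def] .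
qed

lemma LL_N: "LL Nf"
  unfolding Nf_def[abs_def] by (intro LL_bilin[OF bb_mul] LL_id LL_M)

lemma LL_s: assumes "0 \<le> a" shows "LL (sf a)"
proof -
  have F: "LL (\<lambda>R. a * (Mf R \<bullet> Mf R) + 1)"
    by (intro LL_add LL_const LL_bilin[OF bounded_bilinear_mult] LL_bilin[OF bounded_bilinear_inner] LL_M)
  have "LL (\<lambda>R. sqrt (a * (Mf R \<bullet> Mf R) + 1))"
    by (rule LL_compose_real[OF F, of "{u. 1 \<le> u}"]) (auto simp: assms sqrt_lip1)
  then show ?thesis unfolding sf_def[abs_def] .
qed

lemma LL_w: assumes "0 \<le> a" shows "LL (wfun a)"
proof -
  have "LL (\<lambda>R. 1 / sf a R)"
    by (rule LL_compose_real[OF LL_s[OF assms], of "{u. 1 \<le> u}"]) (auto simp: assms s_ge1 inv_lip1)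
  then show ?thesis unfolding wfun_def[abs_def] .
qed

lemma LL_Hb: assumes "0 \<le> a" shows "LL (Hb a c)"
proof -
  note w = LL_w[OF assms]
  have "LL (\<lambda>R. (c * wfun a R) *\<^sub>R (PLm (Mf R) + (PRm R o\<^sub>L PLm R o\<^sub>L TT) + (PRm R o\<^sub>L PRm (transpose R)))
     - (2*a*c * (wfun a R * wfun a R * wfun a R)) *\<^sub>R (SLm (Nf R) o\<^sub>L IRm (Nf R)))"
    by (intro LL_diff LL_add LL_bilin[OF bounded_bilinear_scaleR] LL_bilin[OF bounded_bilinear_mult]
        LL_bilin[OF bounded_bilinear_blinfun_compose] LL_const w LL_id LL_M LL_N
        LL_lin[OF bounded_bilinear.bounded_linear_prod_left[OF bb_mul]]
        LL_lin[OF bounded_bilinear.bounded_linear_prod_right[OF bb_mul]]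
        LL_lin[OF bounded_bilinear.bounded_linear_prod_left[OF bounded_bilinear_scaleR]]
        LL_lin[OF bounded_bilinear.bounded_linear_prod_right[OF bounded_bilinear_inner]]
        LL_lin[OF bl_transpose])
  moreover have "(\<lambda>R. Hb a c R) = (\<lambda>R. (c * wfun a R) *\<^sub>R (PLm (Mf R) + (PRm R o\<^sub>L PLm R o\<^sub>L TT) + (PRm R o\<^sub>L PRm (transpose R)))
     - (2*a*c * (wfun a R * wfun a R * wfun a R)) *\<^sub>R (SLm (Nf R) o\<^sub>L IRm (Nf R)))"
    by (simp only: Hb_eq[OF assms])
  ultimately show ?thesis by simp
qed

lemma semiconvex:
  fixes f :: "'a::euclidean_space \<Rightarrow> real"
  assumes d: "\<forall>x. (f has_derivative (\<lambda>v. G x \<bullet> v)) (at x)" and l: "L-lipschitz_on UNIV G"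
  shows "convex_on UNIV (\<lambda>x. f x + L / 2 * norm x ^ 2)"
proof (rule convex_onI)
  fix t :: real and x y :: 'a
  assume t: "0 < t" "t < 1"
  define dd where "dd = y - x"
  define z where "z s = x + s *\<^sub>R dd" for s
  define \<phi> where "\<phi> s = f (z s) + L / 2 * norm (z s) ^ 2" for s
  define \<phi>' where "\<phi>' s = G (z s) \<bullet> dd + L * (z s \<bullet> dd)" for s
  have L0: "0 \<le> L" using l lipschitz_on_nonneg by blast
  have der: "(\<phi> has_real_derivative \<phi>' s) (at s)" for s
  proof -
    have zd: "(z has_derivative (\<lambda>h. h *\<^sub>R dd)) (at s)"
      unfolding z_def by (auto intro!: derivative_eq_intros)
    have fd: "((\<lambda>s. f (z s)) has_derivative (\<lambda>h. G (z s) \<bullet> (h *\<^sub>R dd))) (at s)"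
      using has_derivative_compose[OF zd d[rule_format, of "z s"]] by simp
    have nd: "((\<lambda>s. norm (z s) ^ 2) has_derivative (\<lambda>h. z s \<bullet> (h *\<^sub>R dd) + (h *\<^sub>R dd) \<bullet> z s)) (at s)"
      unfolding power2_norm_eq_inner using has_derivative_inner[OF zd zd] .
    have "(\<phi> has_derivative (\<lambda>h. G (z s) \<bullet> (h *\<^sub>R dd) + L / 2 * (z s \<bullet> (h *\<^sub>R dd) + (h *\<^sub>R dd) \<bullet> z s))) (at s)"
      unfolding \<phi>_def[abs_def] by (intro has_derivative_add fd has_derivative_mult_right nd)
    then show ?thesis unfolding has_field_derivative_def \<phi>'_def
      by (rule has_derivative_eq_rhs) (auto simp: fun_eq_iff inner_commute algebra_simps)
  qed
  have mono: "\<phi>' s1 \<le> \<phi>' s2" if "s1 \<le> s2" for s1 s2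
  proof -
    have zz: "z s2 - z s1 = (s2 - s1) *\<^sub>R dd" by (simp add: z_def algebra_simps)
    have "\<bar>(G (z s2) - G (z s1)) \<bullet> dd\<bar> \<le> norm (G (z s2) - G (z s1)) * norm dd"
      by (rule Cauchy_Schwarz_ineq2)
    also have "\<dots> \<le> (L * norm (z s2 - z s1)) * norm dd"
      using lipschitz_onD[OF l, of "z s2" "z s1"] by (intro mult_right_mono) (auto simp: dist_norm)
    also have "\<dots> = L * (s2 - s1) * (dd \<bullet> dd)"
      using that by (simp add: zz power2_norm_eq_inner[symmetric] power2_eq_square)
    finally have A: "- (L * (s2 - s1) * (dd \<bullet> dd)) \<le> (G (z s2) - G (z s1)) \<bullet> dd" by linarith
    have B: "L * (z s2 \<bullet> dd) - L * (z s1 \<bullet> dd) = L * (s2 - s1) * (dd \<bullet> dd)"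
      by (simp add: z_def algebra_simps inner_add_left)
    show ?thesis using A B unfolding \<phi>'_def by (simp add: inner_diff_left)
  qed
  have cv: "convex_on UNIV \<phi>"
    by (rule convex_on_realI[of UNIV \<phi> \<phi>']) (auto intro: der mono)
  have "\<phi> ((1 - t) *\<^sub>R 0 + t *\<^sub>R 1) \<le> (1 - t) * \<phi> 0 + t * \<phi> 1"
    using convex_onD[OF cv, of t 0 1] t by simp
  moreover have "z ((1 - t) *\<^sub>R 0 + t *\<^sub>R 1) = (1 - t) *\<^sub>R x + t *\<^sub>R y"
    by (simp add: z_def dd_def algebra_simps)
  moreover have "z 0 = x" "z 1 = y" by (simp_all add: z_def dd_def)
  ultimately show "f ((1 - t) *\<^sub>R x + t *\<^sub>R y) + L / 2 * (norm ((1 - t) *\<^sub>R x + t *\<^sub>R y))\<^sup>2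
        \<le> (1 - t) * (f x + L / 2 * (norm x)\<^sup>2) + t * (f y + L / 2 * (norm y)\<^sup>2)"
    unfolding \<phi>_def by simp
qed simp

lemma G_lip:
  assumes L: "0 < L2" and a: "a = 3*L2^2" and c: "c = 2*a*L2"
  shows "(100*L2^2 + 100*L2^3)-lipschitz_on UNIV (Gf a c)"
proof (rule lipschitz_onI)
  have a0: "0 \<le> a" using a by simp
  fix x y :: "real^3^3"
  have "norm (Gf a c x - Gf a c y) \<le> (100*L2^2 + 100*L2^3) * norm (x - y)"
  proof (rule differentiable_bound[of UNIV])
    show "(Gf a c has_derivative Hap a c z) (at z within UNIV)" for z using dG[OF a0] by simp
    show "onorm (Hap a c z) \<le> 100*L2^2 + 100*L2^3" for z
      by (rule onorm_le) (rule Hbound[OF L a c])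
  qed auto
  then show "dist (Gf a c x) (Gf a c y) \<le> (100*L2^2 + 100*L2^3) * dist x y"
    by (simp add: dist_norm)
next
  show "0 \<le> 100*L2^2 + 100*L2^3" using assms by simp
qed

lemma gfun_facts:
  assumes L: "0 < L2"
  shows "(\<forall>x y. \<bar>x\<bar> \<le> \<bar>y\<bar> \<longrightarrow> gfun L2 x \<le> gfun L2 y)
          \<and> (\<forall>x. 0 \<le> gfun L2 x) \<and> (\<exists>x. gfun L2 x = 0)
          \<and> (\<forall>x. \<bar>x\<bar> = 1 / L2 \<longrightarrow> gfun L2 x = L2)"
proof (intro conjI allI impI)
  fix x y :: real assume "\<bar>x\<bar> \<le> \<bar>y\<bar>"
  then have "x^2 \<le> y^2" by (metis abs_le_square_iff)
  then have "3 * L2^2 * x^2 + 1 \<le> 3 * L2^2 * y^2 + 1" using L by simp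
  then have "sqrt (3 * L2^2 * x^2 + 1) \<le> sqrt (3 * L2^2 * y^2 + 1)" by simp
  then show "gfun L2 x \<le> gfun L2 y" unfolding gfun_def using L by simp
next
  fix x :: real
  have "1 \<le> sqrt (3 * L2^2 * x^2 + 1)" by simp
  then show "0 \<le> gfun L2 x" unfolding gfun_def using L by simp
next
  show "\<exists>x. gfun L2 x = 0" by (rule exI[of _ 0]) (simp add: gfun_def)
next
  fix x :: real assume "\<bar>x\<bar> = 1 / L2"
  then have "x^2 = 1 / L2^2" by (metis power2_abs power_one_over)
  then have e: "3 * L2^2 * x^2 + 1 = 4" using L by simp
  have s4: "sqrt 4 = 2" by (metis real_sqrt_abs abs_numeral power2_eq_square numeral_times_numeral semiring_norm(11) semiring_norm(13) mult_2 numeral_Bit0)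
  have s: "sqrt (3 * L2^2 * x^2 + 1) = 2" by (subst e) (rule s4)
  show "gfun L2 x = L2" unfolding gfun_def s by simp
qed

theorem corollary2:
  shows "(\<exists>q :: real poly. \<forall>L2>0. curvature_bounded (poly q L2) (hbar L2))
    \<and> (\<forall>L2>0. \<exists>G :: real^3^3 \<Rightarrow> real^3^3.
          (\<forall>R. (hbar L2 has_derivative (\<lambda>v. G R \<bullet> v)) (at R)) \<and>
          (\<forall>R. G differentiable (at R)))
    \<and> (\<forall>L2>0. \<exists>(G :: real^3^3 \<Rightarrow> real^3^3) (H :: real^3^3 \<Rightarrow> ((real^3^3) \<Rightarrow>\<^sub>L (real^3^3))).
          (\<forall>R. (hbar L2 has_derivative (\<lambda>v. G R \<bullet> v)) (at R)) \<and>
          (\<forall>R. (G has_derivative blinfun_apply (H R)) (at R)) \<and>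
          (\<forall>R. \<exists>e>0. \<exists>C. C-lipschitz_on (ball R e) H))
    \<and> (\<forall>L2>0. (\<forall>x y. \<bar>x\<bar> \<le> \<bar>y\<bar> \<longrightarrow> gfun L2 x \<le> gfun L2 y)
          \<and> (\<forall>x. 0 \<le> gfun L2 x) \<and> (\<exists>x. gfun L2 x = 0)
          \<and> (\<forall>x. \<bar>x\<bar> = 1 / L2 \<longrightarrow> gfun L2 x = L2))"
proof (intro conjI)
  show "\<exists>q :: real poly. \<forall>L2>0. curvature_bounded (poly q L2) (hbar L2)"
  proof (intro exI allI impI)
    fix L2 :: real assume L: "0 < L2"
    define a where "a = 3*L2^2"
    define c where "c = 2*a*L2"
    have pq: "poly [:0, 0, 100, 100:] L2 = 100*L2^2 + 100*L2^3"
      by (simp add: algebra_simps power2_eq_square power3_eq_cube)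
    have d: "\<forall>R. (hbar L2 has_derivative (\<lambda>v. Gf a c R \<bullet> v)) (at R)"
      using dh[OF L] by (simp add: a_def c_def)
    have l: "(100*L2^2 + 100*L2^3)-lipschitz_on UNIV (Gf a c)"
      by (rule G_lip[OF L a_def c_def])
    show "curvature_bounded (poly [:0, 0, 100, 100:] L2) (hbar L2)"
      unfolding curvature_bounded_def pq
      using semiconvex[OF d l] d l by blast
  qed
next
  show "\<forall>L2>0. \<exists>G :: real^3^3 \<Rightarrow> real^3^3.
          (\<forall>R. (hbar L2 has_derivative (\<lambda>v. G R \<bullet> v)) (at R)) \<and>
          (\<forall>R. G differentiable (at R))"
  proof (intro allI impI)
    fix L2 :: real assume L: "0 < L2"
    have a0: "0 \<le> 3*L2^2" by simp
    show "\<exists>G :: real^3^3 \<Rightarrow> real^3^3.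
          (\<forall>R. (hbar L2 has_derivative (\<lambda>v. G R \<bullet> v)) (at R)) \<and>
          (\<forall>R. G differentiable (at R))"
      using dh[OF L] dG[OF a0] by (blast intro: differentiableI)
  qed
next
  show "\<forall>L2>0. \<exists>(G :: real^3^3 \<Rightarrow> real^3^3) (H :: real^3^3 \<Rightarrow> ((real^3^3) \<Rightarrow>\<^sub>L (real^3^3))).
          (\<forall>R. (hbar L2 has_derivative (\<lambda>v. G R \<bullet> v)) (at R)) \<and>
          (\<forall>R. (G has_derivative blinfun_apply (H R)) (at R)) \<and>
          (\<forall>R. \<exists>e>0. \<exists>C. C-lipschitz_on (ball R e) H)"
  proof (intro allI impI)
    fix L2 :: real assume L: "0 < L2"
    define a where "a = 3*L2^2"
    define c where "c = 2*a*L2"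
    have a0: "0 \<le> a" by (simp add: a_def)
    have d: "\<forall>R. (hbar L2 has_derivative (\<lambda>v. Gf a c R \<bullet> v)) (at R)"
      using dh[OF L] by (simp add: a_def c_def)
    have d2: "\<forall>R. (Gf a c has_derivative blinfun_apply (Hb a c R)) (at R)"
    proof
      fix R
      have bl: "bounded_linear (Hap a c R)" using has_derivative_bounded_linear[OF dG[OF a0]] .
      show "(Gf a c has_derivative blinfun_apply (Hb a c R)) (at R)"
        unfolding Hb_def bounded_linear_Blinfun_apply[OF bl] by (rule dG[OF a0])
    qed
    have ll: "\<forall>R. \<exists>e>0. \<exists>C. C-lipschitz_on (ball R e) (Hb a c)"
      using LL_Hb[OF a0] unfolding LL_def .
    show "\<exists>(G :: real^3^3 \<Rightarrow> real^3^3) (H :: real^3^3 \<Rightarrow> ((real^3^3) \<Rightarrow>\<^sub>L (real^3^3))).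
          (\<forall>R. (hbar L2 has_derivative (\<lambda>v. G R \<bullet> v)) (at R)) \<and>
          (\<forall>R. (G has_derivative blinfun_apply (H R)) (at R)) \<and>
          (\<forall>R. \<exists>e>0. \<exists>C. C-lipschitz_on (ball R e) H)"
      using d d2 ll by blast
  qed
next
  show "\<forall>L2>0. (\<forall>x y. \<bar>x\<bar> \<le> \<bar>y\<bar> \<longrightarrow> gfun L2 x \<le> gfun L2 y)
          \<and> (\<forall>x. 0 \<le> gfun L2 x) \<and> (\<exists>x. gfun L2 x = 0)
          \<and> (\<forall>x. \<bar>x\<bar> = 1 / L2 \<longrightarrow> gfun L2 x = L2)"
    using gfun_facts by blast
qed

end
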